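(* Fix parameters $\tau\in(0,1/100)$ and $M\ge2$, and let $\theta=2+\tau$. Let $G=(\mu,\mathcal{V},\mathcal{W},\mathcal{E},\mathcal{P},f,g)$ be a maximal, non-trivial and structured GCD graph, let $p\in\mathcal{R}(G)$ be a prime with $p>C_6$, and let $k_p\in\mathbb{Z}$ be such that \[ \big(\operatorname{e}_p(v),\operatorname{e}_p(w)\big)\in\big\{(k_p-1,k_p),(k_p,k_p-1),(k_p,k_p),(k_p,k_p+1),(k_p+1,k_p)\big\} \] for all $(v,w)\in\mathcal{E}$. Then there is a non-trivial and maximal GCD subgraph $G'$ of $G$ with multiplicative data $(\mathcal{P}',f',g')$ such that: (a) $\mathcal{P}'=\mathcal{P}\cup\{p\}$; (b) $\mathcal{R}(G')\subseteq\mathcal{R}(G)\setminus\{p\}$; (c) $f'(p),g'(p)\in\{k_p-1,k_p,k_p+1\}$; (d) if $k_p>0$, then $G'$ is a denominator-exact GCD subgraph of $G$, whereas if $k_p<0$, then $G'$ is a numerator-exact GCD subgraph of $G$; (e) $q(G')\geqslant q(G) \big(1-\mathbbm{1}_{f'(p)=g'(p)=k_p}/p\big)^2 \big(1-1/p^{1+\frac{\tau}{4}} \big)$.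
   Context: For a prime $p$, $k\in\mathbb{Z}$ and $\rho\in\mathbb{Q}_{>0}$, write $\operatorname{e}_p(\rho)=k$ if $\rho=p^ka/q$ with $a,q\in\mathbb{N}$, $p\nmid aq$. For real $t$, $t^+=\max\{t,0\}$, $t^-=\max\{-t,0\}$. Weighted bipartite graph: $(\mu,\mathcal{V},\mathcal{W},\mathcal{E})$ with $\mu:\mathbb{R}_{>0}\to\mathbb{R}_{>0}$, $\mathcal{V},\mathcal{W}$ finite sets of positive reals, $\mathcal{E}\subseteq\mathcal{V}\times\mathcal{W}$; $\mu(\mathcal{T})=\sum_{t\in\mathcal{T}}\mu(t)$, $\mu(\mathcal{E})=\sum_{(v,w)\in\mathcal{E}}\mu(v)\mu(w)$; edge density $\delta=\mu(\mathcal{E})/(\mu(\mathcal{V})\mu(\mathcal{W}))$ if $\mathcal{E}\neq\emptyset$, else $0$; $\mu^{(\theta)}=\delta^\theta\mu(\mathcal{V})\mu(\mathcal{W})$. A subgraph has $\mathcal{V}'\subseteq\mathcal{V}$, $\mathcal{W}'\subseteq\mathcal{W}$, $\mathcal{E}'\subseteq\mathcal{E}\cap(\mathcal{V}'\times\mathcal{W}')$, same $\mu$. "Maximal" means $\mu^{(\theta)}(G)\ge\mu^{(\theta)}(G')$ for every subgraph $G'$ (with $\theta=2+\tau$). GCD graph: a septuple $G=(\mu,\mathcal{V},\mathcal{W},\mathcal{E},\mathcal{P},f,g)$ where $(\mu,\mathcal{V},\mathcal{W},\mathcal{E})$ is a weighted bipartite graph with $\mathcal{V},\mathcal{W}\subset\mathbb{Q}_{>0}$,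 $\mathcal{P}$ is a set of primes ($(\mathcal{P},f,g)$ is the "multiplicative data"), $f,g:\mathcal{P}\to\mathbb{Z}$, and for all $p\in\mathcal{P}$ and all $(a/q,b/r)\in\mathcal{V}\times\mathcal{W}$ with $\gcd(a,q)=\gcd(b,r)=1$: $p^{f^+(p)}\mid a$, $p^{g^+(p)}\mid b$, $p^{f^-(p)}\mid q$, $p^{g^-(p)}\mid r$, and if $(a/q,b/r)\in\mathcal{E}$ then the exact power of $p$ dividing $\gcd(a,b)$ is $p^{\min\{f^+(p),g^+(p)\}}$ and that dividing $\gcd(q,r)$ is $p^{\min\{f^-(p),g^-(p)\}}$. $G$ is non-trivial if $\mathcal{E}\neq\emptyset$. Quality: $q(G)=\mu^{(\theta)}(G)\prod_{p\in\mathcal{P}}p^{|f(p)-g(p)|}$. A GCD subgraph $G'=(\mu,\mathcal{V}',\mathcal{W}',\mathcal{E}',\mathcal{P}',f',g')$ of $G$ has $\mathcal{V}'\subseteq\mathcal{V}$, $\mathcal{W}'\subseteq\mathcal{W}$, $\mathcal{E}'\subseteq\mathcal{E}$, $\mathcal{P}'\supseteq\mathcal{P}$, $f'|_{\mathcal{P}}=f$, $g'|_{\mathcal{P}}=g$. It is numerator-exact if for every $p\in\mathcal{P}'\setminus\mathcal{P}$ and every $(a/q,b/r)\in\mathcal{V}'\times\mathcal{W}'$ in lowest terms, $p^{f'^+(p)}$ exactly divides $a$ and $p^{g'^+(p)}$ exactly divides $b$; it is denominator-exact if for every such $p$ and $(a/q,b/r)$, $p^{f'^-(p)}$ exactly divides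 $q$ and $p^{g'^-(p)}$ exactly divides $r$. $\mathcal{R}(G)$ is the set of primes $p\notin\mathcal{P}$ for which there is $(a/q,b/r)\in\mathcal{E}$ with $\gcd(a,q)=\gcd(b,r)=1$ and $p\mid\gcd(a,b)\gcd(q,r)$. $G$ is structured if for each $p\in\mathcal{R}(G)$ there is $k\in\mathbb{Z}$ with $(\operatorname{e}_p(v)-k,\operatorname{e}_p(w)-k)\in\{(-1,0),(0,-1),(0,0),(0,1),(1,0)\}$ for all $(v,w)\in\mathcal{E}$. Constants: $C_1=10^4/\tau$, $C_2=10MC_1^3$, $C_4=10^{10}M^2C_2^2$, $C_6=\max\{C_4,10^4MC_2,C_2^{10/\tau}\}$. *)

theory Defs
  imports "HOL-Computational_Algebra.Computational_Algebra"
begin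

(* A GCD graph (mu, V, W, E, P, f, g).  Vertices are positive rationals;
   mu is only relevant on positive rationals. *)
record gcd_graph =
  mu :: "rat \<Rightarrow> real"
  Vs :: "rat set"
  Ws :: "rat set"
  Es :: "(rat \<times> rat) set"
  Ps :: "nat set"
  ff :: "nat \<Rightarrow> int"
  gg :: "nat \<Rightarrow> int"

definition num :: "rat \<Rightarrow> int" where "num v = fst (quotient_of v)"
definition den :: "rat \<Rightarrow> int" where "den v = snd (quotient_of v)"

definition ep :: "nat \<Rightarrow> rat \<Rightarrow> int" where
  "ep p v = int (multiplicity (int p) (num v)) - int (multiplicity (int p) (den v))"

definition pos_part :: "int \<Rightarrow> nat" where "pos_part t = nat t"
definition neg_part :: "int \<Rightarrow> nat" where "neg_part t = nat (- t)"

definition muS :: "gcd_graph \<Rightarrow> rat set \<Rightarrow> real" where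
  "muS G T = (\<Sum>t\<in>T. mu G t)"

definition muE :: "gcd_graph \<Rightarrow> real" where
  "muE G = (\<Sum>(v,w)\<in>Es G. mu G v * mu G w)"

definition density :: "gcd_graph \<Rightarrow> real" where
  "density G = (if Es G = {} then 0 else muE G / (muS G (Vs G) * muS G (Ws G)))"

definition mutheta :: "real \<Rightarrow> gcd_graph \<Rightarrow> real" where
  "mutheta \<theta> G = density G powr \<theta> * muS G (Vs G) * muS G (Ws G)"

definition maximal :: "real \<Rightarrow> gcd_graph \<Rightarrow> bool" where
  "maximal \<theta> G = (\<forall>V' W' E'. V' \<subseteq> Vs G \<longrightarrow> W' \<subseteq> Ws G \<longrightarrow> E' \<subseteq> Es G \<inter> (V' \<times> W') \<longrightarrow>
       mutheta \<theta> (G\<lparr>Vs := V', Ws := W', Es := E'\<rparr>) \<le> mutheta \<theta> G)"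

definition is_gcd_graph :: "gcd_graph \<Rightarrow> bool" where
  "is_gcd_graph G \<longleftrightarrow>
     (\<forall>x::rat. x > 0 \<longrightarrow> mu G x > 0) \<and>
     finite (Vs G) \<and> finite (Ws G) \<and>
     (\<forall>v\<in>Vs G. v > 0) \<and> (\<forall>w\<in>Ws G. w > 0) \<and>
     Es G \<subseteq> Vs G \<times> Ws G \<and>
     finite (Ps G) \<and> (\<forall>p\<in>Ps G. prime p) \<and>
     (\<forall>p\<in>Ps G. \<forall>v\<in>Vs G. \<forall>w\<in>Ws G.
        (int p) ^ pos_part (ff G p) dvd num v \<and>
        (int p) ^ pos_part (gg G p) dvd num w \<and>
        (int p) ^ neg_part (ff G p) dvd den v \<and>
        (int p) ^ neg_part (gg G p) dvd den w \<and>
        ((v, w) \<in> Es G \<longrightarrow>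
          multiplicity (int p) (gcd (num v) (num w)) = min (pos_part (ff G p)) (pos_part (gg G p)) \<and>
          multiplicity (int p) (gcd (den v) (den w)) = min (neg_part (ff G p)) (neg_part (gg G p))))"

definition nontrivial :: "gcd_graph \<Rightarrow> bool" where
  "nontrivial G \<longleftrightarrow> Es G \<noteq> {}"

definition quality :: "real \<Rightarrow> gcd_graph \<Rightarrow> real" where
  "quality \<theta> G = mutheta \<theta> G * (\<Prod>p\<in>Ps G. real p ^ nat \<bar>ff G p - gg G p\<bar>)"

definition is_gcd_subgraph :: "gcd_graph \<Rightarrow> gcd_graph \<Rightarrow> bool" where
  "is_gcd_subgraph G' G \<longleftrightarrow> is_gcd_graph G' \<and> mu G' = mu G \<and>
     Vs G' \<subseteq> Vs G \<and> Ws G' \<subseteq> Ws G \<and> Es G' \<subseteq> Es G \<and> Ps G \<subseteq> Ps G' \<and>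
     (\<forall>p\<in>Ps G. ff G' p = ff G p \<and> gg G' p = gg G p)"

definition numerator_exact :: "gcd_graph \<Rightarrow> gcd_graph \<Rightarrow> bool" where
  "numerator_exact G' G \<longleftrightarrow> is_gcd_subgraph G' G \<and>
     (\<forall>p\<in>Ps G' - Ps G. \<forall>v\<in>Vs G'. \<forall>w\<in>Ws G'.
        multiplicity (int p) (num v) = pos_part (ff G' p) \<and>
        multiplicity (int p) (num w) = pos_part (gg G' p))"

definition denominator_exact :: "gcd_graph \<Rightarrow> gcd_graph \<Rightarrow> bool" where
  "denominator_exact G' G \<longleftrightarrow> is_gcd_subgraph G' G \<and>
     (\<forall>p\<in>Ps G' - Ps G. \<forall>v\<in>Vs G'. \<forall>w\<in>Ws G'.
        multiplicity (int p) (den v) = neg_part (ff G' p) \<and>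
        multiplicity (int p) (den w) = neg_part (gg G' p))"

definition RR :: "gcd_graph \<Rightarrow> nat set" where
  "RR G = {p. prime p \<and> p \<notin> Ps G \<and>
     (\<exists>(v,w)\<in>Es G. int p dvd gcd (num v) (num w) * gcd (den v) (den w))}"

definition structured :: "gcd_graph \<Rightarrow> bool" where
  "structured G \<longleftrightarrow> (\<forall>p\<in>RR G. \<exists>k::int. \<forall>(v,w)\<in>Es G.
     (ep p v - k, ep p w - k) \<in> {(-1,0),(0,-1),(0,0),(0,1),(1,0)})"

definition C1 :: "real \<Rightarrow> real" where "C1 \<tau> = 10^4 / \<tau>"
definition C2 :: "real \<Rightarrow> real \<Rightarrow> real" where "C2 \<tau> M = 10 * M * (C1 \<tau>)^3"
definition C4 :: "real \<Rightarrow> real \<Rightarrow> real" where "C4 \<tau> M = 10^10 * M^2 * (C2 \<tau> M)^2"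
definition C6 :: "real \<Rightarrow> real \<Rightarrow> real" where
  "C6 \<tau> M = max (C4 \<tau> M) (max (10^4 * M * C2 \<tau> M) (C2 \<tau> M powr (10 / \<tau>)))"

end

theory Submission
  imports Defs "HOL-Analysis.Analysis"
begin

lemma num_den_pos:
  assumes "v > 0"
  shows "num v > 0" "den v > 0" "coprime (num v) (den v)"
proof -
  obtain a b where q: "quotient_of v = (a, b)" by (cases "quotient_of v") auto
  have b: "b > 0" using quotient_of_denom_pos[OF q] .
  have "v = Rat.Fract a b" using q by (metis Rat.Fract_quotient_of fst_conv snd_conv)
  with assms b have "a > 0" by (simp add: Rat.zero_less_Fract_iff)
  then show "num v > 0" "den v > 0" "coprime (num v) (den v)"
    using q b quotient_of_coprime[OF q] by (auto simp: num_def den_def)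
qed

lemma mult_num_den:
  assumes "v > 0" "prime p"
  shows "multiplicity (int p) (num v) = pos_part (ep p v)"
        "multiplicity (int p) (den v) = neg_part (ep p v)"
proof -
  have pp: "prime (int p)" using assms(2) by simp
  note nd = num_den_pos[OF assms(1)]
  have "multiplicity (int p) (num v) = 0 \<or> multiplicity (int p) (den v) = 0"
  proof (rule ccontr)
    assume "\<not> ?thesis"
    then have "int p dvd num v" "int p dvd den v"
      by (metis One_nat_def Suc_leI multiplicity_dvd' power_one_right neq0_conv)+
    then show False using nd(3) pp
      by (metis coprime_common_divisor not_prime_unit)
  qed
  then show "multiplicity (int p) (num v) = pos_part (ep p v)"
        "multiplicity (int p) (den v) = neg_part (ep p v)"
    by (auto simp: ep_def pos_part_def neg_part_def)
qed

lemma dvd_num_iff: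
  assumes "v > 0" "prime p"
  shows "(int p) ^ n dvd num v \<longleftrightarrow> n \<le> pos_part (ep p v)"
        "(int p) ^ n dvd den v \<longleftrightarrow> n \<le> neg_part (ep p v)"
proof -
  note nd = num_den_pos[OF assms(1)]
  have pp: "prime (int p)" using assms(2) by simp
  show "(int p) ^ n dvd num v \<longleftrightarrow> n \<le> pos_part (ep p v)"
    using power_dvd_iff_le_multiplicity[of "num v" "int p" n] nd pp mult_num_den[OF assms]
    by (metis less_irrefl not_prime_unit)
  show "(int p) ^ n dvd den v \<longleftrightarrow> n \<le> neg_part (ep p v)"
    using power_dvd_iff_le_multiplicity[of "den v" "int p" n] nd pp mult_num_den[OF assms]
    by (metis less_irrefl not_prime_unit)
qed

lemma mult_gcd_num_den:
  assumes "v > 0" "w > 0" "prime p"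
  shows "multiplicity (int p) (gcd (num v) (num w)) = min (pos_part (ep p v)) (pos_part (ep p w))"
        "multiplicity (int p) (gcd (den v) (den w)) = min (neg_part (ep p v)) (neg_part (ep p w))"
  using multiplicity_gcd[of "num v" "num w" "int p"] multiplicity_gcd[of "den v" "den w" "int p"]
    num_den_pos[OF assms(1)] num_den_pos[OF assms(2)] mult_num_den[OF assms(1,3)]
    mult_num_den[OF assms(2,3)] assms(3)
  by auto


lemma young0:
  fixes x y al be :: real
  assumes "0 \<le> al" "0 \<le> be" "al + be = 1" "x \<ge> 0" "y \<ge> 0"
  shows "x powr al * y powr be \<le> al * x + be * y"
proof (cases "x = 0 \<or> y = 0")
  case True then show ?thesis using assms by auto
next
  case False then show ?thesis using Youngs_inequality_0[of al be x y] assms by auto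
qed

lemma per_term:
  fixes th mV mW E s a b c t :: real
  assumes th: "th > 1" and pos: "mV > 0" "mW > 0" "E > 0"
    and nn: "s \<ge> 0" "a \<ge> 0" "b \<ge> 0" "c > 0" "t \<ge> 0"
    and sab: "s > 0 \<Longrightarrow> a > 0 \<and> b > 0"
    and lt: "(s/(a*b)) powr th * a * b * c < t * ((E/(mV*mW)) powr th * mV * mW)"
  shows "s / E \<le> (t / c) powr (1/th) * (a*b/(mV*mW)) powr (1 - 1/th)"
proof (cases "s = 0")
  case True then show ?thesis using nn by simp
next
  case False
  then have sp: "s > 0" using nn by simp
  with sab have ap: "a > 0" "b > 0" by auto
  define \<sigma> where "\<sigma> = s / E"
  define \<alpha> where "\<alpha> = a*b/(mV*mW)"
  define D where "D = E/(mV*mW)"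
  have sgp: "\<sigma> > 0" using sp pos by (simp add: \<sigma>_def)
  have alp: "\<alpha> > 0" using ap pos by (simp add: \<alpha>_def)
  have Dp: "D > 0" using pos by (simp add: D_def)
  have m: "mV * mW > 0" using pos by simp
  have e1: "s/(a*b) = \<sigma> * D / \<alpha>" using ap pos
    by (simp add: \<sigma>_def \<alpha>_def D_def field_simps)
  have e2: "a * b = \<alpha> * (mV*mW)" using pos by (simp add: \<alpha>_def field_simps)
  have "(s/(a*b)) powr th * a * b * c = (\<sigma> * D / \<alpha>) powr th * (\<alpha> * (mV*mW)) * c"
    using e1 e2 by (simp add: mult.assoc)
  also have "\<dots> = (\<sigma> powr th * \<alpha> powr (1 - th) * c) * (D powr th * (mV*mW))"
    using sgp alp Dp
    by (simp add: powr_mult powr_divide powr_diff field_simps)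
  finally have eq: "(s/(a*b)) powr th * a * b * c = (\<sigma> powr th * \<alpha> powr (1 - th) * c) * (D powr th * (mV*mW))" .
  have lt': "(s/(a*b)) powr th * a * b * c < t * (D powr th * (mV*mW))"
    using lt by (simp add: D_def mult.assoc)
  then have "(\<sigma> powr th * \<alpha> powr (1 - th) * c) * (D powr th * (mV*mW)) < t * (D powr th * (mV*mW))"
    by (simp only: eq)
  then have "\<sigma> powr th * \<alpha> powr (1 - th) * c < t"
    using Dp m by (simp add: mult_less_cancel_right)
  then have "\<sigma> powr th * \<alpha> powr (1 - th) < t / c" using nn by (simp add: field_simps)
  moreover have "\<sigma> powr th = (\<sigma> powr th * \<alpha> powr (1 - th)) * \<alpha> powr (th - 1)"
    using alp by (simp add: mult.assoc powr_add[symmetric])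
  moreover have "\<alpha> powr (th - 1) > 0" using alp by simp
  ultimately have "\<sigma> powr th < (t / c) * \<alpha> powr (th - 1)"
    by (metis mult_strict_right_mono)
  then have "(\<sigma> powr th) powr (1/th) < ((t / c) * \<alpha> powr (th - 1)) powr (1/th)"
    using th by (intro powr_less_mono2) auto
  also have "((t / c) * \<alpha> powr (th - 1)) powr (1/th) = (t / c) powr (1/th) * \<alpha> powr (1 - 1/th)"
  proof -
    have "((t / c) * \<alpha> powr (th - 1)) powr (1/th) = (t / c) powr (1/th) * (\<alpha> powr (th - 1)) powr (1/th)"
      using nn alp powr_mult[of "t/c" "\<alpha> powr (th - 1)" "1/th"] by simp
    also have "(\<alpha> powr (th - 1)) powr (1/th) = \<alpha> powr ((th - 1) * (1/th))" by (simp add: powr_powr)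
    also have "(th - 1) * (1/th) = 1 - 1/th" using th by (simp add: field_simps)
    finally show ?thesis .
  qed
  finally show ?thesis using sgp th nn pos by (simp add: powr_powr \<sigma>_def \<alpha>_def)
qed

lemma core:
  fixes th mV mW E :: real and s a b c t :: "nat \<Rightarrow> real" and I :: "nat set"
  assumes th: "th > 1" and pos: "mV > 0" "mW > 0" "E > 0" and fin: "finite I"
    and nn: "\<And>i. i \<in> I \<Longrightarrow> s i \<ge> 0 \<and> a i \<ge> 0 \<and> b i \<ge> 0 \<and> c i > 0 \<and> t i \<ge> 0"
    and sab: "\<And>i. i \<in> I \<Longrightarrow> s i > 0 \<Longrightarrow> a i > 0 \<and> b i > 0"
    and sumE: "(\<Sum>i\<in>I. s i) = E"
    and sumab: "(\<Sum>i\<in>I. a i * b i) \<le> mV * mW"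
    and Upos: "0 < (\<Sum>i\<in>I. t i / c i)" and Ult: "(\<Sum>i\<in>I. t i / c i) < 1"
  shows "\<exists>i\<in>I. (s i/(a i*b i)) powr th * a i * b i * c i \<ge> t i * ((E/(mV*mW)) powr th * mV * mW)"
proof (rule ccontr)
  assume "\<not> ?thesis"
  then have lt: "\<And>i. i \<in> I \<Longrightarrow> (s i/(a i*b i)) powr th * a i * b i * c i < t i * ((E/(mV*mW)) powr th * mV * mW)"
    by (simp add: not_le)
  define U where "U = (\<Sum>i\<in>I. t i / c i)"
  define r where "r = 1 - 1/th"
  have r: "r \<ge> 0" "1/th \<ge> 0" "1/th + r = 1" using th by (auto simp: r_def)
  have Up: "U > 0" "U < 1" using Upos Ult by (auto simp: U_def)
  have bound: "s i / E \<le> U powr (1/th) * ((1/th) * (t i / c i / U) + r * (a i*b i/(mV*mW)))"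
    if i: "i \<in> I" for i
  proof -
    have nni: "s i \<ge> 0" "a i \<ge> 0" "b i \<ge> 0" "c i > 0" "t i \<ge> 0" using nn[OF i] by auto
    have "s i / E \<le> (t i / c i) powr (1/th) * (a i*b i/(mV*mW)) powr r"
      unfolding r_def by (rule per_term[OF th pos nni sab[OF i] lt[OF i]])
    also have "(t i / c i) = U * (t i / c i / U)" using Up by simp
    also have "(U * (t i / c i / U)) powr (1/th) = U powr (1/th) * (t i / c i / U) powr (1/th)"
      using Up nni powr_mult[of U "t i / c i / U" "1/th"] by simp
    also have "U powr (1/th) * (t i / c i / U) powr (1/th) * (a i*b i/(mV*mW)) powr r
       = U powr (1/th) * ((t i / c i / U) powr (1/th) * (a i*b i/(mV*mW)) powr r)" by simp
    also have "\<dots> \<le> U powr (1/th) * ((1/th) * (t i / c i / U) + r * (a i*b i/(mV*mW)))"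
      using nni pos Up r by (intro mult_left_mono young0) auto
    finally show ?thesis .
  qed
  have "1 = (\<Sum>i\<in>I. s i / E)" using sumE pos by (simp add: sum_divide_distrib[symmetric])
  also have "\<dots> \<le> (\<Sum>i\<in>I. U powr (1/th) * ((1/th) * (t i / c i / U) + r * (a i*b i/(mV*mW))))"
    using bound by (intro sum_mono) auto
  also have "\<dots> = U powr (1/th) * ((1/th) * ((\<Sum>i\<in>I. t i / c i) / U) + r * ((\<Sum>i\<in>I. a i*b i)/(mV*mW)))"
  proof -
    have s1: "(\<Sum>i\<in>I. (1/th) * (t i / c i / U)) = (1/th) * ((\<Sum>i\<in>I. t i / c i) / U)"
      by (simp add: sum_distrib_left sum_divide_distrib)
    have s2: "(\<Sum>i\<in>I. r * (a i*b i/(mV*mW))) = r * ((\<Sum>i\<in>I. a i*b i)/(mV*mW))"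
      by (simp add: sum_distrib_left sum_divide_distrib)
    show ?thesis by (simp only: sum_distrib_left[symmetric] sum.distrib s1 s2 sum_divide_distrib[symmetric])
  qed
  also have "\<dots> = U powr (1/th) * ((1/th) + r * ((\<Sum>i\<in>I. a i*b i)/(mV*mW)))"
    using Up by (simp add: U_def)
  also have "\<dots> \<le> U powr (1/th) * ((1/th) + r * 1)"
    using sumab pos r by (intro mult_left_mono add_left_mono mult_left_mono) (auto simp: field_simps)
  also have "\<dots> = U powr (1/th)" using r by simp
  also have "\<dots> < 1" using Up th powr_less_mono2[of "1/th" U 1] by simp
  finally show False by simp
qed


definition cand :: "gcd_graph \<Rightarrow> nat \<Rightarrow> rat set \<Rightarrow> rat set \<Rightarrow> int \<Rightarrow> int \<Rightarrow> gcd_graph" where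
  "cand G p V' W' f0 g0 = G\<lparr>Vs := V', Ws := W', Es := Es G \<inter> (V' \<times> W'), Ps := insert p (Ps G),
      ff := (ff G)(p := f0), gg := (gg G)(p := g0)\<rparr>"

lemma cand_simps [simp]:
  "mu (cand G p V' W' f0 g0) = mu G" "Vs (cand G p V' W' f0 g0) = V'" "Ws (cand G p V' W' f0 g0) = W'"
  "Es (cand G p V' W' f0 g0) = Es G \<inter> (V' \<times> W')" "Ps (cand G p V' W' f0 g0) = insert p (Ps G)"
  "ff (cand G p V' W' f0 g0) = (ff G)(p := f0)" "gg (cand G p V' W' f0 g0) = (gg G)(p := g0)"
  by (simp_all add: cand_def)

lemma cand_sub:
  assumes G: "is_gcd_graph G" and p: "prime p" "p \<notin> Ps G"
    and sub: "V' \<subseteq> Vs G" "W' \<subseteq> Ws G"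
    and cv: "\<And>v. v \<in> V' \<Longrightarrow> pos_part f0 \<le> pos_part (ep p v) \<and> neg_part f0 \<le> neg_part (ep p v)"
    and cw: "\<And>w. w \<in> W' \<Longrightarrow> pos_part g0 \<le> pos_part (ep p w) \<and> neg_part g0 \<le> neg_part (ep p w)"
    and ce: "\<And>v w. (v, w) \<in> Es G \<Longrightarrow> v \<in> V' \<Longrightarrow> w \<in> W' \<Longrightarrow>
          min (pos_part (ep p v)) (pos_part (ep p w)) = min (pos_part f0) (pos_part g0) \<and>
          min (neg_part (ep p v)) (neg_part (ep p w)) = min (neg_part f0) (neg_part g0)"
  shows "is_gcd_subgraph (cand G p V' W' f0 g0) G"
proof -
  note Gd = G[unfolded is_gcd_graph_def]
  have vpos: "\<And>v. v \<in> V' \<Longrightarrow> v > 0" and wpos: "\<And>w. w \<in> W' \<Longrightarrow> w > 0"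
    using Gd sub by auto
  have key: "int q ^ pos_part (((ff G)(p := f0)) q) dvd num v \<and>
       int q ^ pos_part (((gg G)(p := g0)) q) dvd num w \<and>
       int q ^ neg_part (((ff G)(p := f0)) q) dvd den v \<and>
       int q ^ neg_part (((gg G)(p := g0)) q) dvd den w \<and>
       ((v, w) \<in> Es G \<inter> V' \<times> W' \<longrightarrow>
        multiplicity (int q) (gcd (num v) (num w)) =
        min (pos_part (((ff G)(p := f0)) q)) (pos_part (((gg G)(p := g0)) q)) \<and>
        multiplicity (int q) (gcd (den v) (den w)) =
        min (neg_part (((ff G)(p := f0)) q)) (neg_part (((gg G)(p := g0)) q)))"
    if q: "q \<in> insert p (Ps G)" and v: "v \<in> V'" and w: "w \<in> W'" for q v w
    proof (cases "q = p")
      case True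
      then show ?thesis
        using dvd_num_iff[OF vpos[OF v] p(1)] dvd_num_iff[OF wpos[OF w] p(1)]
          cv[OF v] cw[OF w] ce[of v w] v w mult_gcd_num_den[OF vpos[OF v] wpos[OF w] p(1)]
        by auto
    next
      case False
      then have qP: "q \<in> Ps G" using q by auto
      have "v \<in> Vs G" "w \<in> Ws G" using v w sub by auto
      then show ?thesis using Gd qP False by auto
    qed
  have fV: "finite V'" "finite W'" using Gd sub finite_subset by blast+
  have "is_gcd_graph (cand G p V' W' f0 g0)"
    unfolding is_gcd_graph_def cand_simps
    apply (intro conjI)
    using Gd fV vpos wpos p key by auto
  then show ?thesis using sub p by (auto simp: is_gcd_subgraph_def)
qed

lemma shrink_sub:
  assumes H: "is_gcd_subgraph H G" and s: "V'' \<subseteq> Vs H" "W'' \<subseteq> Ws H" "E'' \<subseteq> Es H \<inter> (V'' \<times> W'')"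
  shows "is_gcd_subgraph (H\<lparr>Vs := V'', Ws := W'', Es := E''\<rparr>) G"
proof -
  have Hg: "is_gcd_graph H" using H by (simp add: is_gcd_subgraph_def)
  have "is_gcd_graph (H\<lparr>Vs := V'', Ws := W'', Es := E''\<rparr>)"
    using Hg s unfolding is_gcd_graph_def
    apply (simp)
    apply (intro conjI)
    using finite_subset apply blast
    using finite_subset apply blast
    apply blast
    apply blast
    apply blast
    done
  then show ?thesis using H s by (auto simp: is_gcd_subgraph_def)
qed


lemma mutheta_eq:
  "mutheta th K = (muE K / (muS K (Vs K) * muS K (Ws K))) powr th * muS K (Vs K) * muS K (Ws K)"
  by (cases "Es K = {}") (simp_all add: mutheta_def Defs.density_def muE_def)

lemma mutheta_pos_ne: "mutheta th K > 0 \<Longrightarrow> Es K \<noteq> {}"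
  by (auto simp: mutheta_def Defs.density_def)

lemma exists_maximal:
  assumes fin: "finite (Vs H)" "finite (Ws H)" and EH: "Es H \<subseteq> Vs H \<times> Ws H"
  shows "\<exists>V'' W'' E''. V'' \<subseteq> Vs H \<and> W'' \<subseteq> Ws H \<and> E'' \<subseteq> Es H \<inter> (V'' \<times> W'') \<and>
     maximal th (H\<lparr>Vs := V'', Ws := W'', Es := E''\<rparr>) \<and>
     mutheta th (H\<lparr>Vs := V'', Ws := W'', Es := E''\<rparr>) \<ge> mutheta th H"
proof -
  define S where "S = {(V'', W'', E''). V'' \<subseteq> Vs H \<and> W'' \<subseteq> Ws H \<and> E'' \<subseteq> Es H \<inter> (V'' \<times> W'')}"
  define F where "F = (\<lambda>(V'', W'', E''). mutheta th (H\<lparr>Vs := V'', Ws := W'', Es := E''\<rparr>))"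
  have "S \<subseteq> Pow (Vs H) \<times> Pow (Ws H) \<times> Pow (Vs H \<times> Ws H)" by (auto simp: S_def)
  moreover have "finite (Pow (Vs H) \<times> Pow (Ws H) \<times> Pow (Vs H \<times> Ws H))" using fin by auto
  ultimately have finS: "finite S" by (rule finite_subset)
  have memS: "(Vs H, Ws H, Es H) \<in> S" using EH by (auto simp: S_def)
  then have neS: "S \<noteq> {}" by auto
  obtain x where x: "x \<in> S" "\<And>y. y \<in> S \<Longrightarrow> F y \<le> F x"
  proof -
    have "Max (F ` S) \<in> F ` S" using finS neS by (intro Max_in) auto
    then obtain x where "x \<in> S" "F x = Max (F ` S)" by auto
    moreover have "\<And>y. y \<in> S \<Longrightarrow> F y \<le> Max (F ` S)" using finS by (intro Max_ge) auto
    ultimately show ?thesis using that by metis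
  qed
  obtain V'' W'' E'' where xe: "x = (V'', W'', E'')" by (cases x) auto
  have F0: "F (Vs H, Ws H, Es H) = mutheta th H" by (simp add: F_def)
  show ?thesis
  proof (intro exI conjI)
    show "V'' \<subseteq> Vs H" "W'' \<subseteq> Ws H" "E'' \<subseteq> Es H \<inter> (V'' \<times> W'')" using x(1) xe by (auto simp: S_def)
    show "mutheta th (H\<lparr>Vs := V'', Ws := W'', Es := E''\<rparr>) \<ge> mutheta th H"
      using x(2)[OF memS] F0 xe by (simp add: F_def)
    show "maximal th (H\<lparr>Vs := V'', Ws := W'', Es := E''\<rparr>)"
      unfolding maximal_def
    proof (intro allI impI)
      fix V3 W3 E3
      assume a: "V3 \<subseteq> Vs (H\<lparr>Vs := V'', Ws := W'', Es := E''\<rparr>)" "W3 \<subseteq> Ws (H\<lparr>Vs := V'', Ws := W'', Es := E''\<rparr>)"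
        "E3 \<subseteq> Es (H\<lparr>Vs := V'', Ws := W'', Es := E''\<rparr>) \<inter> V3 \<times> W3"
      have "(V3, W3, E3) \<in> S" using a x(1) xe by (auto simp: S_def)
      from x(2)[OF this] show "mutheta th (H\<lparr>Vs := V'', Ws := W'', Es := E''\<rparr>\<lparr>Vs := V3, Ws := W3, Es := E3\<rparr>)
          \<le> mutheta th (H\<lparr>Vs := V'', Ws := W'', Es := E''\<rparr>)"
        using xe by (simp add: F_def)
    qed
  qed
qed


lemma finish:
  fixes th X :: real and k :: int
  assumes G: "is_gcd_graph G" and p: "prime p" "p \<notin> Ps G"
    and Hsub: "is_gcd_subgraph (cand G p V' W' f0 g0) G"
    and f0: "f0 \<in> {k - 1, k, k + 1}" and g0: "g0 \<in> {k - 1, k, k + 1}"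
    and exd: "k > 0 \<Longrightarrow> (\<forall>v\<in>V'. neg_part (ep p v) = neg_part f0) \<and> (\<forall>w\<in>W'. neg_part (ep p w) = neg_part g0)"
    and exn: "k < 0 \<Longrightarrow> (\<forall>v\<in>V'. pos_part (ep p v) = pos_part f0) \<and> (\<forall>w\<in>W'. pos_part (ep p w) = pos_part g0)"
    and ineq: "mutheta th (cand G p V' W' f0 g0) * real p ^ nat \<bar>f0 - g0\<bar>
        \<ge> mutheta th G * (1 - (if f0 = k \<and> g0 = k then 1 else 0) / real p)^2 * X"
    and pos: "mutheta th G * (1 - (if f0 = k \<and> g0 = k then 1 else 0) / real p)^2 * X > 0"
  shows "\<exists>G'. is_gcd_subgraph G' G \<and> nontrivial G' \<and> maximal th G' \<and>
           Ps G' = Ps G \<union> {p} \<and>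
           RR G' \<subseteq> RR G - {p} \<and>
           ff G' p \<in> {k - 1, k, k + 1} \<and> gg G' p \<in> {k - 1, k, k + 1} \<and>
           (k > 0 \<longrightarrow> denominator_exact G' G) \<and>
           (k < 0 \<longrightarrow> numerator_exact G' G) \<and>
           quality th G' \<ge> quality th G
              * (1 - (if ff G' p = k \<and> gg G' p = k then 1 else 0) / real p)^2
              * X"
proof -
  define H where "H = cand G p V' W' f0 g0"
  have Hg: "is_gcd_graph H" using Hsub by (simp add: is_gcd_subgraph_def H_def)
  then have fin: "finite (Vs H)" "finite (Ws H)" and EH: "Es H \<subseteq> Vs H \<times> Ws H"
    by (auto simp: is_gcd_graph_def)
  obtain V'' W'' E'' where m: "V'' \<subseteq> Vs H" "W'' \<subseteq> Ws H" "E'' \<subseteq> Es H \<inter> (V'' \<times> W'')"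
     "maximal th (H\<lparr>Vs := V'', Ws := W'', Es := E''\<rparr>)"
     "mutheta th (H\<lparr>Vs := V'', Ws := W'', Es := E''\<rparr>) \<ge> mutheta th H"
    using exists_maximal[OF fin EH, of th] by blast
  define G' where "G' = H\<lparr>Vs := V'', Ws := W'', Es := E''\<rparr>"
  have G'sub: "is_gcd_subgraph G' G" unfolding G'_def
    using shrink_sub[OF Hsub[folded H_def] m(1-3)] .
  have G's [simp]: "Ps G' = insert p (Ps G)" "ff G' = (ff G)(p := f0)" "gg G' = (gg G)(p := g0)"
    "Vs G' = V''" "Ws G' = W''" "Es G' = E''" "mu G' = mu G"
    by (simp_all add: G'_def H_def)
  have VV: "V'' \<subseteq> V'" "W'' \<subseteq> W'" "E'' \<subseteq> Es G" using m(1-3) by (auto simp: H_def)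
  have Vpos: "\<And>v. v \<in> V' \<Longrightarrow> v > 0" "\<And>w. w \<in> W' \<Longrightarrow> w > 0"
    using Hg by (auto simp: is_gcd_graph_def H_def)
  define PG where "PG = (\<Prod>q\<in>Ps G. real q ^ nat \<bar>ff G q - gg G q\<bar>)"
  have PGnn: "PG \<ge> 0" unfolding PG_def by (intro prod_nonneg) auto
  have finP: "finite (Ps G)" using G by (simp add: is_gcd_graph_def)
  have qG: "quality th G = mutheta th G * PG" by (simp add: quality_def PG_def)
  have "(\<Prod>q\<in>insert p (Ps G). real q ^ nat \<bar>((ff G)(p := f0)) q - ((gg G)(p := g0)) q\<bar>)
      = real p ^ nat \<bar>f0 - g0\<bar> * (\<Prod>q\<in>Ps G. real q ^ nat \<bar>((ff G)(p := f0)) q - ((gg G)(p := g0)) q\<bar>)"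
    using finP p(2) by (simp add: prod.insert)
  also have "(\<Prod>q\<in>Ps G. real q ^ nat \<bar>((ff G)(p := f0)) q - ((gg G)(p := g0)) q\<bar>) = PG"
    unfolding PG_def using p(2) by (intro prod.cong) auto
  finally have qG': "quality th G' = mutheta th G' * (real p ^ nat \<bar>f0 - g0\<bar> * PG)"
    by (simp add: quality_def)
  have mG': "mutheta th G' \<ge> mutheta th H" using m(5) by (simp add: G'_def)
  have pp: "real p ^ nat \<bar>f0 - g0\<bar> > 0" using p(1) prime_gt_0_nat by simp
  have mHpos: "mutheta th H > 0"
  proof (rule ccontr)
    assume "\<not> ?thesis"
    then have "mutheta th H * real p ^ nat \<bar>f0 - g0\<bar> \<le> 0" using pp
      by (simp add: mult_nonpos_nonneg)
    then show False using ineq pos by (simp add: H_def)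
  qed
  show ?thesis
  proof (intro exI[of _ G'] conjI impI)
    show "is_gcd_subgraph G' G" by (rule G'sub)
    show "nontrivial G'" unfolding nontrivial_def
      using mutheta_pos_ne[of th G'] mG' mHpos by simp
    show "maximal th G'" using m(4) by (simp add: G'_def)
    show "Ps G' = Ps G \<union> {p}" by simp
    show "ff G' p \<in> {k - 1, k, k + 1}" "gg G' p \<in> {k - 1, k, k + 1}" using f0 g0 by simp_all
    show "RR G' \<subseteq> RR G - {p}"
      using VV(3) by (auto simp: RR_def)
    show "denominator_exact G' G" if "k > 0"
      unfolding denominator_exact_def using G'sub exd[OF that] VV Vpos mult_num_den p(1)
      by auto
    show "numerator_exact G' G" if "k < 0"
      unfolding numerator_exact_def using G'sub exn[OF that] VV Vpos mult_num_den p(1)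
      by auto
    have "quality th G * (1 - (if f0 = k \<and> g0 = k then 1 else 0) / real p)^2 * X
        = (mutheta th G * (1 - (if f0 = k \<and> g0 = k then 1 else 0) / real p)^2 * X) * PG"
      using qG by simp
    also have "\<dots> \<le> (mutheta th H * real p ^ nat \<bar>f0 - g0\<bar>) * PG"
      using ineq PGnn by (intro mult_right_mono) (auto simp: H_def)
    also have "\<dots> \<le> (mutheta th G' * real p ^ nat \<bar>f0 - g0\<bar>) * PG"
      using mG' PGnn pp by (intro mult_right_mono) auto
    also have "\<dots> = quality th G'" using qG' by simp
    finally show "quality th G' \<ge> quality th G
              * (1 - (if ff G' p = k \<and> gg G' p = k then 1 else 0) / real p)^2 * X" by simp
  qed
qed


lemma mass_facts:
  assumes G: "is_gcd_graph G" and K: "mu K = mu G" "Vs K \<subseteq> Vs G" "Ws K \<subseteq> Ws G" "Es K \<subseteq> Vs K \<times> Ws K"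
  shows "muS K (Vs K) \<ge> 0" "muS K (Ws K) \<ge> 0" "muE K \<ge> 0"
    "muE K > 0 \<Longrightarrow> muS K (Vs K) > 0 \<and> muS K (Ws K) > 0"
    "Es K \<noteq> {} \<Longrightarrow> muE K > 0"
proof -
  note Gd = G[unfolded is_gcd_graph_def]
  have mp: "\<And>v. v \<in> Vs K \<Longrightarrow> mu K v > 0" "\<And>w. w \<in> Ws K \<Longrightarrow> mu K w > 0"
    using Gd K by auto
  have fin: "finite (Vs K)" "finite (Ws K)" using Gd K finite_subset by blast+
  have finE: "finite (Es K)" using fin K(4) finite_subset by blast
  have mp': "\<And>v. v \<in> Vs K \<Longrightarrow> mu K v \<ge> 0" "\<And>w. w \<in> Ws K \<Longrightarrow> mu K w \<ge> 0"
    using mp less_imp_le by blast+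
  show a: "muS K (Vs K) \<ge> 0" "muS K (Ws K) \<ge> 0" unfolding muS_def
    using mp' by (auto intro!: sum_nonneg)
  have tp: "\<And>x. x \<in> Es K \<Longrightarrow> (case x of (v, w) \<Rightarrow> mu K v * mu K w) > 0"
    using mp K(4) by auto
  show "muE K \<ge> 0" unfolding muE_def using tp by (intro sum_nonneg) (auto intro: less_imp_le)
  show "Es K \<noteq> {} \<Longrightarrow> muE K > 0" unfolding muE_def using tp finE
    by (intro sum_pos) auto
  assume "muE K > 0"
  then have "Es K \<noteq> {}" by (auto simp: muE_def)
  then obtain v w where vw: "(v, w) \<in> Es K" by auto
  then have v: "v \<in> Vs K" and w: "w \<in> Ws K" using K(4) by auto
  have "muS K (Vs K) \<ge> mu K v" unfolding muS_def using fin v mp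
    by (intro member_le_sum) (auto intro: less_imp_le)
  moreover have "muS K (Ws K) \<ge> mu K w" unfolding muS_def using fin w mp
    by (intro member_le_sum) (auto intro: less_imp_le)
  ultimately show "muS K (Vs K) > 0 \<and> muS K (Ws K) > 0" using mp v w by force
qed

lemma sub_facts:
  assumes "is_gcd_subgraph H G"
  shows "mu H = mu G" "Vs H \<subseteq> Vs G" "Ws H \<subseteq> Ws G" "Es H \<subseteq> Vs H \<times> Ws H"
  using assms by (auto simp: is_gcd_subgraph_def is_gcd_graph_def)

lemma Xfacts:
  fixes p :: nat and \<tau> X :: real
  assumes p2: "real p \<ge> 2" and t: "0 < \<tau>" "\<tau> < 1/100" and X_def: "X = 1 - 1 / real p powr (1 + \<tau> / 4)"
  shows "X > 0" "0 < (1 - 1 / real p) ^ 2 * X / 1 + X / real p + X / real p" "(1 - 1 / real p) ^ 2 * X / 1 + X / real p + X / real p < 1"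
proof -
  define P where "P = real p powr (1 + \<tau> / 4)"
  have P1: "P > 1"
  proof -
    have "real p powr 0 < real p powr (1 + \<tau> / 4)" using p2 t
      by (subst powr_less_cancel_iff) auto
    then show ?thesis using p2 by (simp add: P_def)
  qed
  have P2: "P < real p ^ 2"
  proof -
    have "real p powr (1 + \<tau> / 4) < real p powr (2::real)" using p2 t
      by (subst powr_less_cancel_iff) auto
    then show ?thesis using p2 by (simp add: P_def)
  qed
  have XP: "X = 1 - 1 / P" by (simp add: X_def P_def)
  have Xpos: "X > 0" using P1 by (simp add: XP)
  have Xlt: "X < 1 - 1 / real p ^ 2"
  proof -
    have "1 / real p ^ 2 < 1 / P" using P1 P2 p2 by (intro divide_strict_left_mono) auto
    then show ?thesis by (simp add: XP)
  qed
  define U where "U = (1 - 1 / real p) ^ 2 * X / 1 + X / real p + X / real p"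
  have Ueq: "U = X * (1 + 1 / real p ^ 2)" using p2
    by (simp add: U_def field_simps power2_eq_square)
  have Upos: "U > 0" using Ueq Xpos by (simp add: add_pos_nonneg)
  have Ult: "U < 1"
  proof -
    have "U < (1 - 1 / real p ^ 2) * (1 + 1 / real p ^ 2)" unfolding Ueq
      using Xlt by (intro mult_strict_right_mono) (auto simp: add_pos_nonneg)
    also have "\<dots> = 1 - (1 / real p ^ 2) ^ 2" by (simp add: algebra_simps power2_eq_square)
    also have "\<dots> \<le> 1" by simp
    finally show ?thesis .
  qed
  then show "(1 - 1 / real p) ^ 2 * X / 1 + X / real p + X / real p < 1" by (simp add: U_def)
  show "X > 0" by (rule Xpos)
  show "0 < (1 - 1 / real p) ^ 2 * X / 1 + X / real p + X / real p" using Upos by (simp add: U_def)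
qed


theorem lemma11p1:
  fixes \<tau> M :: real and G :: gcd_graph and p :: nat and kp :: int
  assumes "0 < \<tau>" and "\<tau> < 1/100" and "M \<ge> 2"
    and "is_gcd_graph G" and "maximal (2 + \<tau>) G" and "nontrivial G" and "structured G"
    and "p \<in> RR G" and "real p > C6 \<tau> M"
    and "\<forall>(v,w)\<in>Es G. (ep p v, ep p w) \<in>
           {(kp - 1, kp), (kp, kp - 1), (kp, kp), (kp, kp + 1), (kp + 1, kp)}"
  shows "\<exists>G'. is_gcd_subgraph G' G \<and> nontrivial G' \<and> maximal (2 + \<tau>) G' \<and>
           Ps G' = Ps G \<union> {p} \<and>
           RR G' \<subseteq> RR G - {p} \<and>
           ff G' p \<in> {kp - 1, kp, kp + 1} \<and> gg G' p \<in> {kp - 1, kp, kp + 1} \<and>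
           (kp > 0 \<longrightarrow> denominator_exact G' G) \<and>
           (kp < 0 \<longrightarrow> numerator_exact G' G) \<and>
           quality (2 + \<tau>) G' \<ge> quality (2 + \<tau>) G
              * (1 - (if ff G' p = kp \<and> gg G' p = kp then 1 else 0) / real p)^2
              * (1 - 1 / real p powr (1 + \<tau> / 4))"
proof -
  note G = assms(4)
  note Gd = G[unfolded is_gcd_graph_def]
  note hE = assms(10)
  define k where "k = kp"
  define th where "th = 2 + \<tau>"
  define X where "X = 1 - 1 / real p powr (1 + \<tau> / 4)"
  have th1: "th > 1" using assms(1) by (simp add: th_def)
  from assms(8) obtain v0 w0 where p: "prime p" "p \<notin> Ps G" and e0: "(v0, w0) \<in> Es G"
    and dv: "int p dvd gcd (num v0) (num w0) * gcd (den v0) (den w0)"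
    by (auto simp: RR_def)
  have v0w0: "v0 > 0" "w0 > 0" using e0 Gd by auto
  have k0: "k \<noteq> 0"
  proof
    assume k: "k = 0"
    have "int p dvd gcd (num v0) (num w0) \<or> int p dvd gcd (den v0) (den w0)"
      using dv p(1) by (simp add: prime_dvd_mult_iff)
    then have "(int p ^ 1 dvd num v0 \<and> int p ^ 1 dvd num w0) \<or> (int p ^ 1 dvd den v0 \<and> int p ^ 1 dvd den w0)"
      by auto
    then have "(1 \<le> pos_part (ep p v0) \<and> 1 \<le> pos_part (ep p w0)) \<or> (1 \<le> neg_part (ep p v0) \<and> 1 \<le> neg_part (ep p w0))"
      using dvd_num_iff[OF v0w0(1) p(1)] dvd_num_iff[OF v0w0(2) p(1)] by blast
    moreover have "(ep p v0, ep p w0) \<in> {(k - 1, k), (k, k - 1), (k, k), (k, k + 1), (k + 1, k)}"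
      using hE e0 by (auto simp: k_def)
    ultimately show False using k by (auto simp: pos_part_def neg_part_def)
  qed
  define s :: int where "s = (if k > 0 then 1 else -1)"
  have sk: "(s = 1 \<and> k > 0) \<or> (s = -1 \<and> k < 0)" using k0 by (auto simp: s_def)
  define L where "L j = {v \<in> Vs G. ep p v = k + j}" for j
  define N where "N j = {w \<in> Ws G. ep p w = k + j}" for j
  have hE': "\<And>v w. (v, w) \<in> Es G \<Longrightarrow> (ep p v, ep p w) \<in> {(k - 1, k), (k, k - 1), (k, k), (k, k + 1), (k + 1, k)}"
    using hE by (auto simp: k_def)
  have EG: "Es G \<subseteq> Vs G \<times> Ws G" using Gd by blast
  define H0 where "H0 = cand G p (L 0 \<union> L s) (N 0 \<union> N s) k k"
  define H1 where "H1 = cand G p (L (-s)) (N 0) (k - s) k"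
  define H2 where "H2 = cand G p (L 0) (N (-s)) k (k - s)"
  have H0s: "is_gcd_subgraph H0 G" unfolding H0_def
    apply (rule cand_sub[OF G p])
    using sk by (auto simp: L_def N_def pos_part_def neg_part_def dest!: hE')
  have H1s: "is_gcd_subgraph H1 G" unfolding H1_def
    apply (rule cand_sub[OF G p])
    using sk by (auto simp: L_def N_def pos_part_def neg_part_def dest!: hE')
  have H2s: "is_gcd_subgraph H2 G" unfolding H2_def
    apply (rule cand_sub[OF G p])
    using sk by (auto simp: L_def N_def pos_part_def neg_part_def dest!: hE')
  have finV: "finite (Vs G)" and finW: "finite (Ws G)" using Gd by auto
  have muV: "\<And>v. v \<in> Vs G \<Longrightarrow> mu G v > 0" and muW: "\<And>w. w \<in> Ws G \<Longrightarrow> mu G w > 0" using Gd by auto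
  have Lsub: "L j \<subseteq> Vs G" "N j \<subseteq> Ws G" for j by (auto simp: L_def N_def)
  have Ldisj: "j \<noteq> j' \<Longrightarrow> L j \<inter> L j' = {}" "j \<noteq> j' \<Longrightarrow> N j \<inter> N j' = {}" for j j'
    by (auto simp: L_def N_def)
  have s0: "s \<noteq> 0" "s \<noteq> -s" "0 \<noteq> -s" using sk by auto
  define mV where "mV = muS G (Vs G)"
  define mW where "mW = muS G (Ws G)"
  define E where "E = muE G"
  define a0 where "a0 = muS G (L 0 \<union> L s)"
  define a1 where "a1 = muS G (L (-s))"
  define a2 where "a2 = muS G (L 0)"
  define b0 where "b0 = muS G (N 0 \<union> N s)"
  define b1 where "b1 = muS G (N 0)"
  define b2 where "b2 = muS G (N (-s))"
  have sumle: "\<And>A B. A \<subseteq> B \<Longrightarrow> B \<subseteq> Vs G \<or> B \<subseteq> Ws G \<Longrightarrow> muS G A \<le> muS G B"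
  proof -
    fix A B assume AB: "A \<subseteq> B" "B \<subseteq> Vs G \<or> B \<subseteq> Ws G"
    then have "finite B" using finV finW finite_subset by blast
    moreover have "\<forall>x\<in>B. mu G x \<ge> 0" using AB muV muW less_imp_le by blast
    ultimately show "muS G A \<le> muS G B" unfolding muS_def using AB(1) by (intro sum_mono2) auto
  qed
  have nnS: "\<And>A. A \<subseteq> Vs G \<or> A \<subseteq> Ws G \<Longrightarrow> muS G A \<ge> 0"
    using sumle[of "{}"] by (simp add: muS_def)
  have addS: "\<And>A B. A \<inter> B = {} \<Longrightarrow> A \<union> B \<subseteq> Vs G \<or> A \<union> B \<subseteq> Ws G \<Longrightarrow> muS G (A \<union> B) = muS G A + muS G B"
  proof -
    fix A B assume AB: "A \<inter> B = {}" "A \<union> B \<subseteq> Vs G \<or> A \<union> B \<subseteq> Ws G"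
    then have "finite A" "finite B" using finV finW finite_subset by (meson le_sup_iff)+
    then show "muS G (A \<union> B) = muS G A + muS G B" unfolding muS_def using AB(1) by (rule sum.union_disjoint)
  qed
  have a20: "a2 \<le> a0" unfolding a2_def a0_def using Lsub by (intro sumle) auto
  have b10: "b1 \<le> b0" unfolding b1_def b0_def using Lsub by (intro sumle) auto
  have a01: "a0 + a1 \<le> mV"
  proof -
    have "a0 + a1 = muS G ((L 0 \<union> L s) \<union> L (-s))" unfolding a0_def a1_def
      using Ldisj[of 0 "-s"] Ldisj[of s "-s"] s0 Lsub by (intro addS[symmetric]) auto
    also have "\<dots> \<le> mV" unfolding mV_def using Lsub by (intro sumle) auto
    finally show ?thesis .
  qed
  have b02: "b0 + b2 \<le> mW"
  proof -
    have "b0 + b2 = muS G ((N 0 \<union> N s) \<union> N (-s))" unfolding b0_def b2_def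
      using Ldisj[of 0 "-s"] Ldisj[of s "-s"] s0 Lsub by (intro addS[symmetric]) auto
    also have "\<dots> \<le> mW" unfolding mW_def using Lsub by (intro sumle) auto
    finally show ?thesis .
  qed
  have nn: "a0 \<ge> 0" "a1 \<ge> 0" "a2 \<ge> 0" "b0 \<ge> 0" "b1 \<ge> 0" "b2 \<ge> 0"
    unfolding a0_def a1_def a2_def b0_def b1_def b2_def using Lsub by (auto intro!: nnS)
  have sumab: "a0 * b0 + a1 * b1 + a2 * b2 \<le> mV * mW"
  proof -
    have "a1 * b1 \<le> a1 * b0" using nn b10 by (intro mult_left_mono) auto
    moreover have "a2 * b2 \<le> a0 * b2" using nn a20 by (intro mult_right_mono) auto
    moreover have "(a0 + a1) * (b0 + b2) \<le> mV * mW" using a01 b02 nn by (intro mult_mono) auto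
    moreover have "a1 * b2 \<ge> 0" using nn by simp
    ultimately show ?thesis by (simp add: algebra_simps)
  qed
  have finE: "finite (Es G)" using EG finV finW finite_subset by blast
  define A0 where "A0 = Es G \<inter> (L 0 \<union> L s) \<times> (N 0 \<union> N s)"
  define A1 where "A1 = Es G \<inter> L (-s) \<times> N 0"
  define A2 where "A2 = Es G \<inter> L 0 \<times> N (-s)"
  have cover: "Es G = (A0 \<union> A1) \<union> A2"
  proof
    show "(A0 \<union> A1) \<union> A2 \<subseteq> Es G" by (auto simp: A0_def A1_def A2_def)
    show "Es G \<subseteq> (A0 \<union> A1) \<union> A2"
    proof
      fix x assume x: "x \<in> Es G"
      obtain v w where xv: "x = (v, w)" by (cases x) auto
      have vw: "v \<in> Vs G" "w \<in> Ws G" using x xv EG by auto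
      have "(ep p v, ep p w) \<in> {(k - 1, k), (k, k - 1), (k, k), (k, k + 1), (k + 1, k)}"
        using hE' x xv by auto
      then show "x \<in> (A0 \<union> A1) \<union> A2" using sk vw x xv
        by (auto simp: A0_def A1_def A2_def L_def N_def)
    qed
  qed
  have d01: "A0 \<inter> A1 = {}" "(A0 \<union> A1) \<inter> A2 = {}"
    using Ldisj[of 0 "-s"] Ldisj[of s "-s"] s0 by (auto simp: A0_def A1_def A2_def)
  define wt where "wt = (\<lambda>(v::rat, w::rat). mu G v * mu G w)"
  have muEG: "muE G = sum wt A0 + sum wt A1 + sum wt A2"
  proof -
    have fA: "finite A0" "finite A1" "finite A2" using finE by (auto simp: A0_def A1_def A2_def)
    have "muE G = sum wt ((A0 \<union> A1) \<union> A2)" unfolding muE_def wt_def using cover by simp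
    also have "\<dots> = sum wt (A0 \<union> A1) + sum wt A2" using fA d01 by (intro sum.union_disjoint) auto
    also have "sum wt (A0 \<union> A1) = sum wt A0 + sum wt A1" using fA d01 by (intro sum.union_disjoint) auto
    finally show ?thesis .
  qed
  have e0: "muE H0 = sum wt A0" by (simp add: H0_def muE_def wt_def A0_def)
  have e1: "muE H1 = sum wt A1" by (simp add: H1_def muE_def wt_def A1_def)
  have e2: "muE H2 = sum wt A2" by (simp add: H2_def muE_def wt_def A2_def)
  have va: "muS H0 (Vs H0) = a0" "muS H1 (Vs H1) = a1" "muS H2 (Vs H2) = a2"
     "muS H0 (Ws H0) = b0" "muS H1 (Ws H1) = b1" "muS H2 (Ws H2) = b2"
    by (simp_all add: H0_def H1_def H2_def muS_def a0_def a1_def a2_def b0_def b1_def b2_def)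
  note mf0 = mass_facts[OF G sub_facts[OF H0s]]
  note mf1 = mass_facts[OF G sub_facts[OF H1s]]
  note mf2 = mass_facts[OF G sub_facts[OF H2s]]
  note mfG = mass_facts[OF G, of G, simplified, OF EG]
  have GE: "Es G \<noteq> {}" using assms(6) by (simp add: nontrivial_def)
  have posG: "mV > 0" "mW > 0" "E > 0" using mfG(4)[OF mfG(5)[OF GE]] mfG(5)[OF GE]
    by (auto simp: mV_def mW_def E_def)
  have p2: "real p \<ge> 2" using prime_ge_2_nat[OF p(1)] by linarith
  have Xf: "X > 0" "0 < (1 - 1 / real p) ^ 2 * X / 1 + X / real p + X / real p"
     "(1 - 1 / real p) ^ 2 * X / 1 + X / real p + X / real p < 1"
    using Xfacts[OF p2 assms(1,2) X_def] by auto
  have Xpos: "X > 0" using Xf by simp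
  have F0pos: "(1 - 1 / real p) ^ 2 > 0" using p2 by simp
  define sf :: "nat \<Rightarrow> real" where "sf i = (if i = 0 then muE H0 else if i = 1 then muE H1 else muE H2)" for i
  define af :: "nat \<Rightarrow> real" where "af i = (if i = 0 then a0 else if i = 1 then a1 else a2)" for i
  define bf :: "nat \<Rightarrow> real" where "bf i = (if i = 0 then b0 else if i = 1 then b1 else b2)" for i
  define cf :: "nat \<Rightarrow> real" where "cf i = (if i = 0 then 1 else real p)" for i
  define tf :: "nat \<Rightarrow> real" where "tf i = (if i = 0 then (1 - 1 / real p) ^ 2 * X else X)" for i
  have "\<exists>i\<in>{0,1,2}. (sf i/(af i*bf i)) powr th * af i * bf i * cf i \<ge> tf i * ((E/(mV*mW)) powr th * mV * mW)"
  proof (rule core[OF th1 posG])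
    show "finite {0, 1, 2::nat}" by simp
    show "sf i \<ge> 0 \<and> af i \<ge> 0 \<and> bf i \<ge> 0 \<and> cf i > 0 \<and> tf i \<ge> 0" if "i \<in> {0,1,2}" for i
    proof -
      have c: "i = 0 \<or> i = 1 \<or> i = 2" using that by auto
      have "(1 - 1 / real p) ^ 2 * X \<ge> 0" using F0pos Xpos by simp
      then show ?thesis using c mf0(3) mf1(3) mf2(3) nn p2 Xpos
        by (elim disjE) (simp_all add: sf_def af_def bf_def cf_def tf_def)
    qed
    show "af i > 0 \<and> bf i > 0" if "i \<in> {0,1,2}" "sf i > 0" for i
    proof -
      have c: "i = 0 \<or> i = 1 \<or> i = 2" using that by auto
      then show ?thesis using that(2) mf0(4) mf1(4) mf2(4) va
        by (elim disjE) (simp_all add: sf_def af_def bf_def)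
    qed
    show "(\<Sum>i\<in>{0,1,2}. sf i) = E" using muEG e0 e1 e2 by (simp add: sf_def E_def)
    show "(\<Sum>i\<in>{0,1,2}. af i * bf i) \<le> mV * mW" using sumab by (simp add: af_def bf_def)
    show "0 < (\<Sum>i\<in>{0,1,2}. tf i / cf i)" using Xf by (simp add: tf_def cf_def)
    show "(\<Sum>i\<in>{0,1,2}. tf i / cf i) < 1" using Xf by (simp add: tf_def cf_def)
  qed
  then obtain i where i: "i \<in> {0,1,2}"
    and ci: "(sf i/(af i*bf i)) powr th * af i * bf i * cf i \<ge> tf i * ((E/(mV*mW)) powr th * mV * mW)"
    by blast
  have mG: "mutheta th G = (E/(mV*mW)) powr th * mV * mW"
    by (simp add: mutheta_eq E_def mV_def mW_def)
  have mGpos: "mutheta th G > 0" using posG by (simp add: mG)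
  have mH: "mutheta th H0 = (muE H0/(a0*b0)) powr th * a0 * b0"
    "mutheta th H1 = (muE H1/(a1*b1)) powr th * a1 * b1"
    "mutheta th H2 = (muE H2/(a2*b2)) powr th * a2 * b2"
    using va by (simp_all add: mutheta_eq)
  have kk: "\<not> (k - s = k)" using s0 by simp
  have R: "\<exists>G'. is_gcd_subgraph G' G \<and> nontrivial G' \<and> maximal th G' \<and>
           Ps G' = Ps G \<union> {p} \<and>
           RR G' \<subseteq> RR G - {p} \<and>
           ff G' p \<in> {k - 1, k, k + 1} \<and> gg G' p \<in> {k - 1, k, k + 1} \<and>
           (k > 0 \<longrightarrow> denominator_exact G' G) \<and>
           (k < 0 \<longrightarrow> numerator_exact G' G) \<and>
           quality th G' \<ge> quality th G
              * (1 - (if ff G' p = k \<and> gg G' p = k then 1 else 0) / real p)^2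
              * X"
  proof -
    have c: "i = 0 \<or> i = 1 \<or> i = 2" using i by auto
    moreover {
      assume i0: "i = 0"
      have "mutheta th H0 * real p ^ nat \<bar>k - k\<bar> \<ge> mutheta th G * (1 - (if k = k \<and> k = k then 1 else 0) / real p)^2 * X"
        using ci i0 mH mG by (simp add: sf_def af_def bf_def cf_def tf_def mult_ac)
      moreover have "mutheta th G * (1 - (if k = k \<and> k = k then 1 else 0) / real p)^2 * X > 0"
        using mGpos F0pos Xpos by simp
      ultimately have ?thesis
        using H0s unfolding H0_def
        apply (intro finish[OF G p])
        using sk by (auto simp: L_def N_def pos_part_def neg_part_def H0_def)
    }
    moreover {
      assume i1: "i = 1"
      have "mutheta th H1 * real p ^ nat \<bar>(k - s) - k\<bar> \<ge> mutheta th G * (1 - (if k - s = k \<and> k = k then 1 else 0) / real p)^2 * X"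
        using ci i1 mH mG sk by (auto simp: sf_def af_def bf_def cf_def tf_def mult_ac)
      moreover have "mutheta th G * (1 - (if k - s = k \<and> k = k then 1 else 0) / real p)^2 * X > 0"
        using mGpos Xpos kk by simp
      ultimately have ?thesis
        using H1s unfolding H1_def
        apply (intro finish[OF G p])
        using sk by (auto simp: L_def N_def pos_part_def neg_part_def H1_def)
    }
    moreover {
      assume i2: "i = 2"
      have "mutheta th H2 * real p ^ nat \<bar>k - (k - s)\<bar> \<ge> mutheta th G * (1 - (if k = k \<and> k - s = k then 1 else 0) / real p)^2 * X"
        using ci i2 mH mG sk by (auto simp: sf_def af_def bf_def cf_def tf_def mult_ac)
      moreover have "mutheta th G * (1 - (if k = k \<and> k - s = k then 1 else 0) / real p)^2 * X > 0"
        using mGpos Xpos kk by simp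
      ultimately have ?thesis
        using H2s unfolding H2_def
        apply (intro finish[OF G p])
        using sk by (auto simp: L_def N_def pos_part_def neg_part_def H2_def)
    }
    ultimately show ?thesis by blast
  qed
  then show ?thesis by (simp only: k_def th_def X_def)
qed
end
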